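(* Let $K\ge 2$, let $\mathcal{X}$ be an input space, let $\mathcal{Y}$ be the set of probability vectors in $\mathbb{R}^K$, and for $k\in\{1,\dots,K\}$ let $\vec{k}\in\mathcal{Y}$ denote the one-hot vector of label $k$. Let $f:\mathcal{X}\to\mathcal{Y}$ be a classifier whose output probability vectors have strictly positive entries, and let $\ell(\boldsymbol{p},\boldsymbol{y}):=-\sum_{k=1}^K\boldsymbol{y}[k]\log\boldsymbol{p}[k]$ be the cross-entropy loss. Let $\boldsymbol{y}\in\mathcal{Y}$ be a one-hot label vector, let $\widetilde{\boldsymbol{x}}\in\mathcal{X}$ be arbitrary (a perturbed version of a training input), let $0<\epsilon\le 2$, and let $k^\ast$ be a least likely label under $f(\widetilde{\boldsymbol{x}})$, i.e. $k^\ast\in\arg\min_{k} f(\widetilde{\boldsymbol{x}})[k]$. Define $$\rho(\widetilde{\boldsymbol{x}},\boldsymbol{y}):=\Big(1-\frac{\epsilon}{2}\Big)\boldsymbol{y}+\frac{\epsilon}{2}\vec{k^\ast}\in\mathcal{Y}.$$ Then $$\rho(\widetilde{\boldsymbol{x}},\boldsymbol{y})\in\arg\max_{\widetilde{\boldsymbol{y}}\in\mathcal{Y},\ \|\widetilde{\boldsymbol{y}}-\boldsymbol{y}\|_1\le\epsilon}\ \ell\big(f(\widetilde{\boldsymbol{x}}),\widetilde{\boldsymbol{y}}\big),$$ i.e. $\rho(\widetilde{\boldsymbol{x}},\boldsymbol{y})$ maximizes the cross-entropy loss of the prediction $f(\widetilde{\boldsymbol{x}})$ over all label distributions within $\mathrm{L}_1$-distance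 $\epsilon$ of $\boldsymbol{y}$.
   Context: Labels are represented as probability vectors over $\{1,\dots,K\}$; $\|\cdot\|_1$ is the $\mathrm{L}_1$ norm on $\mathbb{R}^K$. The vector $\rho(\widetilde{\boldsymbol{x}},\boldsymbol{y})$ (the "adversarial label") is obtained by shifting probability mass $\epsilon/2$ from the ground-truth label to the least likely predicted label. *)

theory Defs
  imports "HOL-Analysis.Analysis"
begin

text \<open>Vectors in R^K are represented as functions nat => real indexed by {1..K},
  required to vanish outside {1..K}.\<close>

definition prob_vec :: "nat \<Rightarrow> (nat \<Rightarrow> real) \<Rightarrow> bool" where
  "prob_vec K p \<longleftrightarrow> (\<forall>k\<in>{1..K}. p k \<ge> 0) \<and> (\<forall>k. k \<notin> {1..K} \<longrightarrow> p k = 0)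
     \<and> (\<Sum>k\<in>{1..K}. p k) = 1"

definition one_hot :: "nat \<Rightarrow> nat \<Rightarrow> real" where
  "one_hot j = (\<lambda>k. if k = j then 1 else 0)"

definition l1_dist :: "nat \<Rightarrow> (nat \<Rightarrow> real) \<Rightarrow> (nat \<Rightarrow> real) \<Rightarrow> real" where
  "l1_dist K p q = (\<Sum>k\<in>{1..K}. \<bar>p k - q k\<bar>)"

definition cross_entropy :: "nat \<Rightarrow> (nat \<Rightarrow> real) \<Rightarrow> (nat \<Rightarrow> real) \<Rightarrow> real" where
  "cross_entropy K p y = - (\<Sum>k\<in>{1..K}. y k * ln (p k))"

end

theory Submission
  imports Defs
begin

lemma sum_one_hot: "j \<in> A \<Longrightarrow> finite A \<Longrightarrow> (\<Sum>k\<in>A. g k * one_hot j k) = g j"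
  unfolding one_hot_def by (simp add: if_distrib sum.delta' cong: if_cong)

theorem theorem1:
  fixes K :: nat and f :: "'x \<Rightarrow> nat \<Rightarrow> real" and x :: 'x
    and y :: "nat \<Rightarrow> real" and \<epsilon> :: real and kstar :: nat
  assumes "K \<ge> 2"
    and "\<And>z. prob_vec K (f z)"
    and "\<And>z k. k \<in> {1..K} \<Longrightarrow> f z k > 0"
    and "j \<in> {1..K}" and "y = one_hot j"
    and "0 < \<epsilon>" and "\<epsilon> \<le> 2"
    and "kstar \<in> {1..K}" and "\<And>k. k \<in> {1..K} \<Longrightarrow> f x kstar \<le> f x k"
  shows "prob_vec K (\<lambda>k. (1 - \<epsilon>/2) * y k + (\<epsilon>/2) * one_hot kstar k)
    \<and> l1_dist K (\<lambda>k. (1 - \<epsilon>/2) * y k + (\<epsilon>/2) * one_hot kstar k) y \<le> \<epsilon>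
    \<and> (\<forall>y'. prob_vec K y' \<and> l1_dist K y' y \<le> \<epsilon> \<longrightarrow>
        cross_entropy K (f x) y' \<le>
        cross_entropy K (f x) (\<lambda>k. (1 - \<epsilon>/2) * y k + (\<epsilon>/2) * one_hot kstar k))"
proof -
  define A where "A = {1..K}"
  have fA: "finite A" by (simp add: A_def)
  have jA: "j \<in> A" and kA: "kstar \<in> A" using assms(4,8) by (auto simp: A_def)
  define rho where "rho = (\<lambda>k. (1 - \<epsilon>/2) * y k + (\<epsilon>/2) * one_hot kstar k)"
  have oh: "\<And>a. (\<Sum>k\<in>A. one_hot a k) = (if a \<in> A then 1 else 0)"
    unfolding one_hot_def using fA by (simp add: sum.delta')
  have P1: "prob_vec K rho"
  proof -
    have "(\<Sum>k\<in>A. rho k) = (1 - \<epsilon>/2) * (\<Sum>k\<in>A. y k) + (\<epsilon>/2) * (\<Sum>k\<in>A. one_hot kstar k)"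
      unfolding rho_def by (simp add: sum.distrib sum_distrib_left)
    also have "\<dots> = 1" using oh jA kA assms(5) by simp
    finally show ?thesis unfolding prob_vec_def A_def[symmetric]
      using assms(5,6,7) jA kA by (auto simp: rho_def one_hot_def A_def)
  qed
  have P2: "l1_dist K rho y \<le> \<epsilon>"
  proof -
    have "l1_dist K rho y = (\<Sum>k\<in>A. (\<epsilon>/2) * \<bar>one_hot kstar k - one_hot j k\<bar>)"
      unfolding l1_dist_def A_def[symmetric] rho_def assms(5)
      by (rule sum.cong) (use assms(6) in \<open>auto simp: one_hot_def\<close>)
    also have "\<dots> \<le> (\<Sum>k\<in>A. (\<epsilon>/2) * (one_hot kstar k + one_hot j k))"
      by (rule sum_mono) (use assms(6) in \<open>auto simp: one_hot_def\<close>)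
    also have "\<dots> = (\<epsilon>/2) * ((\<Sum>k\<in>A. one_hot kstar k) + (\<Sum>k\<in>A. one_hot j k))"
      by (simp only: sum_distrib_left[symmetric] sum.distrib)
    also have "\<dots> = \<epsilon>" using oh jA kA by simp
    finally show ?thesis .
  qed
  define c where "c = (\<lambda>k. - ln (f x k))"
  have cle: "\<And>k. k \<in> A \<Longrightarrow> c k \<le> c kstar"
    unfolding c_def A_def using assms(3,9) kA A_def by auto
  have CE: "\<And>w. cross_entropy K (f x) w = (\<Sum>k\<in>A. w k * c k)"
    unfolding cross_entropy_def c_def A_def by (simp add: sum_negf)
  have CErho: "cross_entropy K (f x) rho = (1 - \<epsilon>/2) * c j + (\<epsilon>/2) * c kstar"
  proof -
    have "(\<Sum>k\<in>A. rho k * c k) = (1 - \<epsilon>/2) * (\<Sum>k\<in>A. c k * one_hot j k) + (\<epsilon>/2) * (\<Sum>k\<in>A. c k * one_hot kstar k)"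
      unfolding rho_def assms(5) sum_distrib_left sum.distrib[symmetric]
      by (rule sum.cong) (simp_all add: algebra_simps)
    then show ?thesis using CE sum_one_hot[OF jA fA] sum_one_hot[OF kA fA] by simp
  qed
  have P3: "cross_entropy K (f x) y' \<le> cross_entropy K (f x) rho"
    if py: "prob_vec K y'" and dy: "l1_dist K y' y \<le> \<epsilon>" for y'
  proof -
    have nn: "\<And>k. k \<in> A \<Longrightarrow> y' k \<ge> 0" using py by (auto simp: prob_vec_def A_def)
    have s1: "(\<Sum>k\<in>A. y' k) = 1" using py by (auto simp: prob_vec_def A_def)
    have split: "\<And>g. (\<Sum>k\<in>A. g k) = g j + (\<Sum>k\<in>A-{j}. g k)"
      using fA jA by (simp add: sum.remove)
    have rest: "(\<Sum>k\<in>A-{j}. y' k) = 1 - y' j" using split[of y'] s1 by simp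
    have yj1: "y' j \<le> 1" using rest sum_nonneg[of "A-{j}" y'] nn by force
    have "l1_dist K y' y = \<bar>y' j - 1\<bar> + (\<Sum>k\<in>A-{j}. \<bar>y' k - y k\<bar>)"
      unfolding l1_dist_def A_def[symmetric] using split[of "\<lambda>k. \<bar>y' k - y k\<bar>"]
      by (simp add: assms(5) one_hot_def)
    also have "(\<Sum>k\<in>A-{j}. \<bar>y' k - y k\<bar>) = (\<Sum>k\<in>A-{j}. y' k)"
      by (rule sum.cong) (auto simp: assms(5) one_hot_def nn)
    finally have "l1_dist K y' y = 2 * (1 - y' j)" using rest yj1 by simp
    with dy have yjge: "y' j \<ge> 1 - \<epsilon>/2" by simp
    have "(\<Sum>k\<in>A-{j}. y' k * c k) \<le> (\<Sum>k\<in>A-{j}. y' k * c kstar)"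
      by (rule sum_mono) (auto intro: mult_left_mono cle nn)
    also have "\<dots> = (1 - y' j) * c kstar" by (simp only: sum_distrib_right[symmetric] rest)
    finally have "(\<Sum>k\<in>A. y' k * c k) \<le> y' j * c j + (1 - y' j) * c kstar"
      using split[of "\<lambda>k. y' k * c k"] by simp
    moreover have "(y' j - (1 - \<epsilon>/2)) * (c j - c kstar) \<le> 0"
      using yjge cle[OF jA] by (simp add: mult_nonneg_nonpos)
    moreover have "y' j * c j + (1 - y' j) * c kstar - ((1 - \<epsilon>/2) * c j + (\<epsilon>/2) * c kstar)
        = (y' j - (1 - \<epsilon>/2)) * (c j - c kstar)" by (simp add: field_simps)
    ultimately have "(\<Sum>k\<in>A. y' k * c k) \<le> (1 - \<epsilon>/2) * c j + (\<epsilon>/2) * c kstar"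
      by linarith
    then show ?thesis unfolding CErho CE[of y'] .
  qed
  show ?thesis using P1 P2 P3 unfolding rho_def by blast
qed

end
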